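(* Strong admissibility semantics is serialisable with the selection function $\alpha_{gr}(X,Y,Z)=X$ and the termination function $\beta_{adm}(F,S)=1$ for all $F,S$.
   Context: An abstract argumentation framework (AF) is a pair $F=(A,R)$ with $A$ a finite subset of a fixed universal set of arguments $\mathfrak{A}$ and $R\subseteq A\times A$ ($a\to b$ means $(a,b)\in R$). For $S\subseteq A$: $S^+=\{a\mid \exists b\in S: b\to a\}$, $S^-=\{a\mid\exists b\in S: a\to b\}$; for sets $S,S'$, $S\to S'$ means $S^+\cap S'\neq\emptyset$. $S$ defends $b$ if every attacker of $b$ is attacked by some element of $S$; $S$ is admissible if it is conflict-free and defends all its elements. An admissible set $E$ is strongly admissible if $E=\emptyset$ or each $a\in E$ is defended by some strongly admissible $E'\subseteq E\setminus\{a\}$; strong admissibility semantics assigns to $F$ the set of its strongly admissible sets. An initial set is a non-empty admissible set with no non-empty admissible proper subset; $\mathrm{IS}(F)$ is the set of initial sets. An initial set $S$ is unattacked if $S^-=\emptyset$; unchallenged if $S^-\neq\emptyset$ and no $S'\in\mathrm{IS}(F)$ has $S'\to S$; challenged if some $S'\in\mathrm{IS}(F)$ has $S'\to S$. Write $\mathrm{IS}^{u}(F),\mathrm{IS}^{uc}(F),\mathrm{IS}^{c}(F)$ for these sets. The reduct is $F^S=(A',R\cap(A'\times A'))$ with $A'=A\setminus(S\cup S^+)$. A selection function $\alpha$ maps any three sets $X,Y,Z$ of sets of arguments to a subset of $X\cup Y\cup Z$; a termination function $\beta$ maps pairs $(F,S)$ to $\{0,1\}$. Transitions: $(F,S)\to(F^{S'},S\cup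 S')$ whenever $S'\in\alpha(\mathrm{IS}^u(F),\mathrm{IS}^{uc}(F),\mathrm{IS}^c(F))$. $(F,S)\leadsto^{\alpha,\beta}(F',S')$ means $(F',S')$ is reachable from $(F,S)$ in finitely many (possibly zero) transitions and $\beta(F',S')=1$. $\mathcal{E}^{\alpha,\beta}(F)$ is the set of all $S$ with $(F,\emptyset)\leadsto^{\alpha,\beta}(F',S)$ for some $F'$. A semantics $\sigma$ is serialisable with $\alpha,\beta$ if $\sigma(F)=\mathcal{E}^{\alpha,\beta}(F)$ for all AFs $F$. *)

theory Defs
  imports Main
begin

type_synonym 'a af = "'a set \<times> ('a \<times> 'a) set"

definition args :: "'a af \<Rightarrow> 'a set" where "args F = fst F"
definition atts :: "'a af \<Rightarrow> ('a \<times> 'a) set" where "atts F = snd F"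

definition wf_af :: "'a af \<Rightarrow> bool" where
  "wf_af F \<longleftrightarrow> finite (args F) \<and> atts F \<subseteq> args F \<times> args F"

definition plus :: "'a af \<Rightarrow> 'a set \<Rightarrow> 'a set" where
  "plus F S = {a. \<exists>b\<in>S. (b, a) \<in> atts F}"
definition minus :: "'a af \<Rightarrow> 'a set \<Rightarrow> 'a set" where
  "minus F S = {a. \<exists>b\<in>S. (a, b) \<in> atts F}"

definition set_attacks :: "'a af \<Rightarrow> 'a set \<Rightarrow> 'a set \<Rightarrow> bool" where
  "set_attacks F S S' \<longleftrightarrow> plus F S \<inter> S' \<noteq> {}"

definition defends :: "'a af \<Rightarrow> 'a set \<Rightarrow> 'a \<Rightarrow> bool" where
  "defends F S b \<longleftrightarrow> (\<forall>a. (a, b) \<in> atts F \<longrightarrow> (\<exists>c\<in>S. (c, a) \<in> atts F))"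

definition conflict_free :: "'a af \<Rightarrow> 'a set \<Rightarrow> bool" where
  "conflict_free F S \<longleftrightarrow> S \<subseteq> args F \<and> (\<forall>a\<in>S. \<forall>b\<in>S. (a, b) \<notin> atts F)"

definition admissible :: "'a af \<Rightarrow> 'a set \<Rightarrow> bool" where
  "admissible F S \<longleftrightarrow> conflict_free F S \<and> (\<forall>b\<in>S. defends F S b)"

text \<open>Strongly admissible sets (recursive definition; well-founded since
  E' is a proper subset of E when E is non-empty).\<close>
inductive strongly_admissible :: "'a af \<Rightarrow> 'a set \<Rightarrow> bool" for F where
  "admissible F E \<Longrightarrow>
   (E = {} \<or> (\<forall>a\<in>E. \<exists>E'. E' \<subseteq> E - {a} \<and> strongly_admissible F E' \<and> defends F E' a)) \<Longrightarrow>
   strongly_admissible F E"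

definition strong_adm :: "'a af \<Rightarrow> 'a set set" where
  "strong_adm F = {E. strongly_admissible F E}"

definition initial :: "'a af \<Rightarrow> 'a set \<Rightarrow> bool" where
  "initial F S \<longleftrightarrow> S \<noteq> {} \<and> admissible F S \<and>
     (\<forall>S'. S' \<subset> S \<and> S' \<noteq> {} \<longrightarrow> \<not> admissible F S')"

definition IS :: "'a af \<Rightarrow> 'a set set" where
  "IS F = {S. initial F S}"

definition IS_u :: "'a af \<Rightarrow> 'a set set" where
  "IS_u F = {S \<in> IS F. minus F S = {}}"

definition IS_uc :: "'a af \<Rightarrow> 'a set set" where
  "IS_uc F = {S \<in> IS F. minus F S \<noteq> {} \<and> \<not> (\<exists>S'\<in>IS F. set_attacks F S' S)}"

definition IS_c :: "'a af \<Rightarrow> 'a set set" where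
  "IS_c F = {S \<in> IS F. \<exists>S'\<in>IS F. set_attacks F S' S}"

definition reduct :: "'a af \<Rightarrow> 'a set \<Rightarrow> 'a af" where
  "reduct F S = (let A' = args F - (S \<union> plus F S) in (A', atts F \<inter> (A' \<times> A')))"

type_synonym 'a selection = "'a set set \<Rightarrow> 'a set set \<Rightarrow> 'a set set \<Rightarrow> 'a set set"
text \<open>Termination function: values in {0,1} are represented as bool (1 = True).\<close>
type_synonym 'a term_fun = "'a af \<Rightarrow> 'a set \<Rightarrow> bool"

definition selection_function :: "'a selection \<Rightarrow> bool" where
  "selection_function \<alpha> \<longleftrightarrow> (\<forall>X Y Z. \<alpha> X Y Z \<subseteq> X \<union> Y \<union> Z)"

definition trans_step :: "'a selection \<Rightarrow> 'a af \<times> 'a set \<Rightarrow> 'a af \<times> 'a set \<Rightarrow> bool" where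
  "trans_step \<alpha> c c' \<longleftrightarrow>
     (\<exists>S'\<in>\<alpha> (IS_u (fst c)) (IS_uc (fst c)) (IS_c (fst c)).
        c' = (reduct (fst c) S', snd c \<union> S'))"

definition leads :: "'a selection \<Rightarrow> 'a term_fun \<Rightarrow> 'a af \<times> 'a set \<Rightarrow> 'a af \<times> 'a set \<Rightarrow> bool" where
  "leads \<alpha> \<beta> c c' \<longleftrightarrow> (trans_step \<alpha>)\<^sup>*\<^sup>* c c' \<and> \<beta> (fst c') (snd c')"

definition ext_serial :: "'a selection \<Rightarrow> 'a term_fun \<Rightarrow> 'a af \<Rightarrow> 'a set set" where
  "ext_serial \<alpha> \<beta> F = {S. \<exists>F'. leads \<alpha> \<beta> (F, {}) (F', S)}"

definition serialisable :: "('a af \<Rightarrow> 'a set set) \<Rightarrow> 'a selection \<Rightarrow> 'a term_fun \<Rightarrow> bool" where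
  "serialisable \<sigma> \<alpha> \<beta> \<longleftrightarrow> (\<forall>F. wf_af F \<longrightarrow> \<sigma> F = ext_serial \<alpha> \<beta> F)"

definition alpha_gr :: "'a selection" where
  "alpha_gr X Y Z = X"

definition beta_adm :: "'a term_fun" where
  "beta_adm F S = True"

end

theory Submission
  imports Defs
begin

inductive grow :: "'a af \<Rightarrow> 'a set \<Rightarrow> bool" for F where
  g0: "grow F {}"
| gS: "grow F S \<Longrightarrow> a \<in> args F \<Longrightarrow> a \<notin> S \<Longrightarrow> defends F S a \<Longrightarrow> grow F (insert a S)"

lemma defends_mono: "defends F S a \<Longrightarrow> S \<subseteq> T \<Longrightarrow> defends F T a"
  unfolding defends_def by blast

lemma adm_attacker: "admissible F S \<Longrightarrow> defends F S a \<Longrightarrow> c \<in> S \<Longrightarrow> (c, a) \<notin> atts F"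
  unfolding admissible_def conflict_free_def defends_def by blast

lemma grow_adm: "grow F S \<Longrightarrow> admissible F S"
proof (induction rule: grow.induct)
  case g0
  then show ?case by (simp add: admissible_def conflict_free_def)
next
  case (gS S a)
  have n1: "\<And>c. c \<in> S \<Longrightarrow> (c, a) \<notin> atts F" using adm_attacker gS by metis
  have n2: "(a, a) \<notin> atts F" using gS.hyps(4) n1 unfolding defends_def by blast
  have n3: "\<And>s. s \<in> S \<Longrightarrow> (a, s) \<notin> atts F"
    using gS.IH n1 unfolding admissible_def defends_def by blast
  have cf: "conflict_free F (insert a S)"
    using gS.IH gS.hyps(2) n1 n2 n3 unfolding admissible_def conflict_free_def by auto
  have df: "\<forall>b\<in>insert a S. defends F (insert a S) b"
  proof
    fix b assume "b \<in> insert a S"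
    then have "defends F S b" using gS.IH gS.hyps(4) unfolding admissible_def by auto
    then show "defends F (insert a S) b" by (rule defends_mono) blast
  qed
  show ?case using cf df unfolding admissible_def by blast
qed

lemma grow_sa: "grow F S \<Longrightarrow> strongly_admissible F S"
proof (induction rule: grow.induct)
  case g0
  then show ?case by (rule strongly_admissible.intros) (simp_all add: admissible_def conflict_free_def)
next
  case (gS S a)
  have adm: "admissible F (insert a S)" using grow.gS[OF gS.hyps] grow_adm by blast
  have old: "\<forall>x\<in>S. \<exists>E'. E' \<subseteq> S - {x} \<and> strongly_admissible F E' \<and> defends F E' x"
    using gS.IH by (cases rule: strongly_admissible.cases) auto
  show ?case
  proof (rule strongly_admissible.intros[OF adm], rule disjI2, intro ballI)
    fix x assume "x \<in> insert a S"
    then show "\<exists>E'. E' \<subseteq> insert a S - {x} \<and> strongly_admissible F E' \<and> defends F E' x"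
    proof
      assume "x = a" then show ?thesis using gS by blast
    next
      assume xS: "x \<in> S"
      obtain E' where E': "E' \<subseteq> S - {x}" "strongly_admissible F E'" "defends F E' x"
        using old xS by blast
      have "E' \<subseteq> insert a S - {x}" using E'(1) by blast
      then show ?thesis using E'(2,3) by blast
    qed
  qed
qed

lemma grow_union: "grow F T \<Longrightarrow> grow F S \<Longrightarrow> grow F (S \<union> T)"
proof (induction rule: grow.induct)
  case g0
  then show ?case by simp
next
  case (gS T a)
  have g: "grow F (S \<union> T)" using gS by blast
  show ?case
  proof (cases "a \<in> S \<union> T")
    case True
    then have "S \<union> insert a T = S \<union> T" by blast
    then show ?thesis using g by simp
  next
    case False
    have "grow F (insert a (S \<union> T))"
      by (rule grow.gS[OF g gS.hyps(2) False defends_mono[OF gS.hyps(4)]]) blast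
    then show ?thesis by simp
  qed
qed

lemma grow_Union: "finite B \<Longrightarrow> (\<And>b. b \<in> B \<Longrightarrow> grow F (f b)) \<Longrightarrow> grow F (\<Union>b\<in>B. f b)"
proof (induction rule: finite_induct)
  case empty then show ?case by (simp add: grow.g0)
next
  case (insert x B)
  then show ?case using grow_union[of F "f x" "\<Union>b\<in>B. f b"] by (simp add: Un_commute)
qed

lemma sa_grow:
  assumes wf: "wf_af F"
  shows "strongly_admissible F E \<Longrightarrow> grow F E"
proof (induction rule: strongly_admissible.induct)
  case (1 E)
  show ?case
  proof (cases "E = {}")
    case True then show ?thesis by (simp add: grow.g0)
  next
    case False
    then have "\<forall>a\<in>E. \<exists>E'. E' \<subseteq> E - {a} \<and> grow F E' \<and> defends F E' a" using 1 by blast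
    then obtain f where f: "\<And>a. a \<in> E \<Longrightarrow> f a \<subseteq> E - {a} \<and> grow F (f a) \<and> defends F (f a) a"
      by metis
    have sub: "E \<subseteq> args F" using 1 unfolding admissible_def conflict_free_def by blast
    have fin: "finite E" using wf sub unfolding wf_af_def using finite_subset by blast
    have "grow F (\<Union>a\<in>E. insert a (f a))"
    proof (rule grow_Union[OF fin])
      fix a assume a: "a \<in> E"
      show "grow F (insert a (f a))" using f[OF a] sub a by (intro grow.gS) auto
    qed
    moreover have "(\<Union>a\<in>E. insert a (f a)) = E" using f by blast
    ultimately show ?thesis by simp
  qed
qed

lemma reduct_empty: "wf_af F \<Longrightarrow> reduct F {} = F"
  unfolding reduct_def wf_af_def plus_def Let_def args_def atts_def
  by (cases F) auto

lemma args_reduct: "args (reduct F S) = args F - (S \<union> plus F S)"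
  unfolding reduct_def Let_def args_def by simp

lemma atts_reduct: "atts (reduct F S) = atts F \<inter> ((args F - (S \<union> plus F S)) \<times> (args F - (S \<union> plus F S)))"
  unfolding reduct_def Let_def atts_def args_def by simp

lemma reduct_reduct:
  assumes "a \<in> args (reduct F S)"
  shows "reduct (reduct F S) {a} = reduct F (insert a S)"
proof -
  define A1 where "A1 = args F - (S \<union> plus F S)"
  have aA: "a \<in> A1" using assms unfolding args_reduct A1_def .
  have atts1: "atts (reduct F S) = atts F \<inter> (A1 \<times> A1)" unfolding A1_def by (rule atts_reduct)
  have p1: "plus (reduct F S) {a} = {x \<in> A1. (a, x) \<in> atts F}"
    using aA unfolding plus_def atts1 by auto
  have p2: "plus F (insert a S) = plus F S \<union> {x. (a, x) \<in> atts F}"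
    unfolding plus_def by blast
  have e: "args (reduct (reduct F S) {a}) = args (reduct F (insert a S))"
    unfolding args_reduct[of "reduct F S"] p1 unfolding args_reduct A1_def[symmetric] p2
    unfolding A1_def by blast
  have sub: "args (reduct F (insert a S)) \<subseteq> A1"
    unfolding args_reduct p2 A1_def by blast
  have "atts (reduct (reduct F S) {a}) = atts (reduct F S) \<inter> (args (reduct F (insert a S)) \<times> args (reduct F (insert a S)))"
    using e unfolding atts_reduct[of "reduct F S"] args_reduct[symmetric] by simp
  also have "\<dots> = atts (reduct F (insert a S))"
  proof -
    have atts2: "atts (reduct F (insert a S)) = atts F \<inter> (args (reduct F (insert a S)) \<times> args (reduct F (insert a S)))"
      unfolding args_reduct by (rule atts_reduct)
    show ?thesis using sub unfolding atts1 atts2 by blast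
  qed
  finally show ?thesis using e unfolding args_def atts_def by (simp add: prod_eq_iff)
qed

lemma ISu_char:
  assumes "X \<in> IS_u G"
  shows "\<exists>a. X = {a} \<and> a \<in> args G \<and> (\<forall>b. (b, a) \<notin> atts G)"
proof -
  have i: "initial G X" and m: "minus G X = {}" using assms unfolding IS_u_def IS_def by auto
  then obtain a where a: "a \<in> X" unfolding initial_def by blast
  have aA: "a \<in> args G" using i a unfolding initial_def admissible_def conflict_free_def by blast
  have na: "\<forall>b. (b, a) \<notin> atts G" using m a unfolding minus_def by blast
  have "admissible G {a}" using aA na unfolding admissible_def conflict_free_def defends_def by blast
  then have "X = {a}" using i a unfolding initial_def by blast
  then show ?thesis using aA na by blast
qed

lemma reach_grow:
  assumes wf: "wf_af F"
  shows "(trans_step alpha_gr)\<^sup>*\<^sup>* (F, {}) c \<Longrightarrow> fst c = reduct F (snd c) \<and> grow F (snd c)"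
proof (induction rule: rtranclp_induct)
  case base
  then show ?case using reduct_empty[OF wf] by (simp add: grow.g0)
next
  case (step y z)
  obtain G S where y: "y = (G, S)" by (cases y)
  have G: "G = reduct F S" and gS: "grow F S" using step.IH y by auto
  obtain X where X: "X \<in> IS_u G" and z: "z = (reduct G X, S \<union> X)"
    using step.hyps(2) y unfolding trans_step_def alpha_gr_def by auto
  obtain a where Xa: "X = {a}" and aA: "a \<in> args G" and na: "\<forall>b. (b, a) \<notin> atts G"
    using ISu_char[OF X] by blast
  have a1: "a \<in> args F" "a \<notin> S" "a \<notin> plus F S" using aA unfolding G args_reduct by auto
  have def: "defends F S a"
    unfolding defends_def
  proof (intro allI impI)
    fix b assume ba: "(b, a) \<in> atts F"
    have bA: "b \<in> args F" using ba wf unfolding wf_af_def by blast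
    have "b \<notin> S" using ba a1 unfolding plus_def by blast
    moreover have "b \<in> S \<union> plus F S"
    proof (rule ccontr)
      assume "b \<notin> S \<union> plus F S"
      then have "(b, a) \<in> atts G" using ba bA a1 unfolding G atts_reduct by auto
      then show False using na by blast
    qed
    ultimately show "\<exists>c\<in>S. (c, b) \<in> atts F" unfolding plus_def by blast
  qed
  have "grow F (insert a S)" using grow.gS[OF gS a1(1,2) def] .
  moreover have "reduct G X = reduct F (insert a S)" using Xa G aA reduct_reduct by metis
  ultimately show ?case using z Xa by simp
qed

lemma grow_reach:
  assumes wf: "wf_af F"
  shows "grow F S \<Longrightarrow> (trans_step alpha_gr)\<^sup>*\<^sup>* (F, {}) (reduct F S, S)"
proof (induction rule: grow.induct)
  case g0
  then show ?case using reduct_empty[OF wf] by simp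
next
  case (gS S a)
  let ?G = "reduct F S"
  have adm: "admissible F S" using grow_adm gS.hyps(1) by blast
  have n1: "\<And>c. c \<in> S \<Longrightarrow> (c, a) \<notin> atts F" using adm_attacker adm gS.hyps(4) by metis
  have aG: "a \<in> args ?G" using gS.hyps n1 unfolding args_reduct plus_def by blast
  have na: "\<forall>b. (b, a) \<notin> atts ?G"
  proof (intro allI notI)
    fix b assume "(b, a) \<in> atts ?G"
    then have "(b, a) \<in> atts F" "b \<notin> plus F S" unfolding atts_reduct by auto
    then show False using gS.hyps(4) unfolding defends_def plus_def by blast
  qed
  have adm1: "admissible ?G {a}" using aG na unfolding admissible_def conflict_free_def defends_def by blast
  have "{a} \<in> IS_u ?G"
    unfolding IS_u_def IS_def initial_def minus_def using adm1 na by auto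
  then have "trans_step alpha_gr (?G, S) (reduct ?G {a}, S \<union> {a})"
    unfolding trans_step_def alpha_gr_def by auto
  moreover have "reduct ?G {a} = reduct F (insert a S)" using reduct_reduct aG by metis
  ultimately have "trans_step alpha_gr (?G, S) (reduct F (insert a S), insert a S)" by simp
  then show ?case by (rule rtranclp.rtrancl_into_rtrancl[OF gS.IH])
qed

theorem theorem7:
  shows "serialisable strong_adm alpha_gr beta_adm"
  unfolding serialisable_def
proof (intro allI impI)
  fix F :: "'a af" assume wf: "wf_af F"
  show "strong_adm F = ext_serial alpha_gr beta_adm F"
  proof (intro set_eqI iffI)
    fix S assume "S \<in> strong_adm F"
    then have "grow F S" using sa_grow[OF wf] unfolding strong_adm_def by blast
    then show "S \<in> ext_serial alpha_gr beta_adm F"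
      using grow_reach[OF wf] unfolding ext_serial_def leads_def beta_adm_def by fastforce
  next
    fix S assume "S \<in> ext_serial alpha_gr beta_adm F"
    then obtain F' where "(trans_step alpha_gr)\<^sup>*\<^sup>* (F, {}) (F', S)"
      unfolding ext_serial_def leads_def by blast
    then have "grow F S" using reach_grow[OF wf] by fastforce
    then show "S \<in> strong_adm F" using grow_sa unfolding strong_adm_def by blast
  qed
qed

end
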